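(* Let $s,t\in\mathbb{R}$ with $s\ne0$, $s^2+4t>0$, and $q=\varphi'_{s,t}/\varphi_{s,t}\ne1$. Let $p$ be a $q$-periodic function, i.e. $p(qy)=p(y)$ for all $y$ in its domain (in the paper $p(x)=G(\log_q(x))$ with $G$ periodic of period one). Let $0\le a<b$ and let $f$ be $(s,t)$-integrable on $[0,r]$ for $r\in\{a,b\}$ and continuous at $0$. Then $$\int_a^b p(x)f(x)\,d_{s,t}x=p\!\left(\frac{b}{\varphi_{s,t}}\right)\int_0^b f(x)\,d_{s,t}x-p\!\left(\frac{a}{\varphi_{s,t}}\right)\int_0^a f(x)\,d_{s,t}x,$$ where for $a=0$ the second term is interpreted as $0$.
   Context: $\varphi_{s,t}=\frac{s+\sqrt{s^2+4t}}{2}$, $\varphi'_{s,t}=\frac{s-\sqrt{s^2+4t}}{2}$. If $0<\lvert q\rvert<1$, $\int_a^b f(x)\,d_{s,t}x=(1-q)\sum_{n=0}^\infty\big[bf(bq^n/\varphi_{s,t})-af(aq^n/\varphi_{s,t})\big]q^n$; if $\lvert q\rvert>1$, $\int_a^b f(x)\,d_{s,t}x=(1-q)\sum_{n=0}^\infty\big[bf(bq^{-n}/\varphi'_{s,t})-af(aq^{-n}/\varphi'_{s,t})\big]q^{-n}$. In particular $\int_0^r f\,d_{s,t}x$ is the corresponding series with only the $r$-terms. "$(s,t)$-integrable on $[0,r]$" means this series converges. *)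

theory Defs
  imports Complex_Main
begin

definition phi :: "real \<Rightarrow> real \<Rightarrow> real" where
  "phi s t = (s + sqrt (s^2 + 4*t)) / 2"

definition phi' :: "real \<Rightarrow> real \<Rightarrow> real" where
  "phi' s t = (s - sqrt (s^2 + 4*t)) / 2"

definition qst :: "real \<Rightarrow> real \<Rightarrow> real" where
  "qst s t = phi' s t / phi s t"

definition st_integral :: "real \<Rightarrow> real \<Rightarrow> (real \<Rightarrow> real) \<Rightarrow> real \<Rightarrow> real \<Rightarrow> real" where
  "st_integral s t f a b =
     (let q = qst s t in
      if \<bar>q\<bar> < 1 then
        (1 - q) * (\<Sum>n. (b * f (b * q^n / phi s t) - a * f (a * q^n / phi s t)) * q^n)
      else
        (1 - q) * (\<Sum>n. (b * f (b * inverse q ^ n / phi' s t)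
                          - a * f (a * inverse q ^ n / phi' s t)) * inverse q ^ n))"

definition st_integrable :: "real \<Rightarrow> real \<Rightarrow> (real \<Rightarrow> real) \<Rightarrow> real \<Rightarrow> bool" where
  "st_integrable s t f r =
     (let q = qst s t in
      if \<bar>q\<bar> < 1 then summable (\<lambda>n. r * f (r * q^n / phi s t) * q^n)
      else summable (\<lambda>n. r * f (r * inverse q ^ n / phi' s t) * inverse q ^ n))"

end

theory Submission
  imports Defs
begin

lemma per_fwd:
  assumes "\<forall>y. y \<noteq> 0 \<longrightarrow> p (q * y) = p y"
  shows "p (q^n * y) * q^n = p y * (q::real)^n"
proof (cases "q = 0 \<and> n > 0")
  case True then show ?thesis by simp
next
  case False
  show ?thesis
  proof (cases "q = 0")
    case True with False show ?thesis by simp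
  next
    case qn: False
    have "p (q^n * y) = p y"
    proof (induction n)
      case 0 then show ?case by simp
    next
      case (Suc n)
      show ?case
      proof (cases "q^n * y = 0")
        case True
        then have "y = 0" using qn by simp
        then show ?thesis by simp
      next
        case False
        have "p (q^Suc n * y) = p (q * (q^n * y))" by (simp add: mult.assoc)
        also have "\<dots> = p (q^n * y)" using assms False by blast
        finally show ?thesis using Suc by simp
      qed
    qed
    then show ?thesis by simp
  qed
qed

lemma per_inv:
  assumes "\<forall>y. y \<noteq> 0 \<longrightarrow> p (q * y) = p y" and "(q::real) \<noteq> 0"
  shows "p (inverse q ^ n * y) = p y"
proof (induction n)
  case 0 then show ?case by simp
next
  case (Suc n)
  define w where "w = inverse q ^ n * y"
  have "p (inverse q * w) = p w"
  proof (cases "w = 0")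
    case True then show ?thesis by simp
  next
    case False
    then have "inverse q * w \<noteq> 0" using assms(2) by simp
    then have "p (q * (inverse q * w)) = p (inverse q * w)" using assms(1) by blast
    moreover have "q * (inverse q * w) = w" using assms(2) by (simp add: field_simps)
    ultimately show ?thesis by simp
  qed
  then show ?case using Suc by (simp add: w_def mult.assoc)
qed

theorem mainTheorem5:
  fixes s t a b :: real and p f :: "real \<Rightarrow> real"
  assumes "s \<noteq> 0" and "s^2 + 4*t > 0" and "qst s t \<noteq> 1"
    and "\<forall>y. y \<noteq> 0 \<longrightarrow> p (qst s t * y) = p y"
    and "0 \<le> a" and "a < b"
    and "st_integrable s t f a" and "st_integrable s t f b"
    and "isCont f 0"
  shows "st_integral s t (\<lambda>x. p x * f x) a b
           = p (b / phi s t) * st_integral s t f 0 b - p (a / phi s t) * st_integral s t f 0 a"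
proof -
  define q where "q = qst s t"
  have per: "\<forall>y. y \<noteq> 0 \<longrightarrow> p (q * y) = p y" using assms(4) q_def by simp
  show ?thesis
  proof (cases "\<bar>q\<bar> < 1")
    case True
    have sa: "summable (\<lambda>n. a * f (a * q^n / phi s t) * q^n)"
      using assms(7) True unfolding st_integrable_def q_def by (simp add: Let_def)
    have sb: "summable (\<lambda>n. b * f (b * q^n / phi s t) * q^n)"
      using assms(8) True unfolding st_integrable_def q_def by (simp add: Let_def)
    have tb: "b * (p (b * q^n / phi s t) * f (b * q^n / phi s t)) * q^n
        = p (b / phi s t) * (b * f (b * q^n / phi s t) * q^n)" for b n
    proof -
      have e: "b * q^n / phi s t = q^n * (b / phi s t)" by simp
      show ?thesis unfolding e using per_fwd[OF per, of n "b / phi s t"]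
        by (simp add: algebra_simps) blast
    qed
    have "(\<Sum>n. (b * (p (b * q^n / phi s t) * f (b * q^n / phi s t))
              - a * (p (a * q^n / phi s t) * f (a * q^n / phi s t))) * q^n)
        = (\<Sum>n. p (b / phi s t) * (b * f (b * q^n / phi s t) * q^n)
              - p (a / phi s t) * (a * f (a * q^n / phi s t) * q^n))"
      by (simp add: left_diff_distrib tb)
    also have "\<dots> = p (b / phi s t) * (\<Sum>n. b * f (b * q^n / phi s t) * q^n)
              - p (a / phi s t) * (\<Sum>n. a * f (a * q^n / phi s t) * q^n)"
      using suminf_diff[OF summable_mult[OF sb] summable_mult[OF sa]] suminf_mult[OF sb] suminf_mult[OF sa]
      by simp
    also note E = calculation
    have L: "st_integral s t (\<lambda>x. p x * f x) a b = (1 - q) * (\<Sum>n. (b * (p (b * q^n / phi s t) * f (b * q^n / phi s t))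
              - a * (p (a * q^n / phi s t) * f (a * q^n / phi s t))) * q^n)"
      unfolding st_integral_def q_def[symmetric] using True by (simp add: Let_def)
    have R: "st_integral s t f 0 c = (1 - q) * (\<Sum>n. c * f (c * q^n / phi s t) * q^n)" for c
      unfolding st_integral_def q_def[symmetric] using True by (simp add: Let_def)
    show ?thesis unfolding L R E by (simp add: algebra_simps)
  next
    case False
    have q0: "q \<noteq> 0" using False by auto
    have ph: "phi s t \<noteq> 0" using q0 unfolding q_def qst_def by auto
    have ph': "phi' s t = q * phi s t" using ph unfolding q_def qst_def by simp
    let ?i = "inverse q"
    have sa: "summable (\<lambda>n. a * f (a * ?i^n / phi' s t) * ?i^n)"
      using assms(7) False unfolding st_integrable_def q_def by (simp add: Let_def)
    have sb: "summable (\<lambda>n. b * f (b * ?i^n / phi' s t) * ?i^n)"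
      using assms(8) False unfolding st_integrable_def q_def by (simp add: Let_def)
    have pe: "p (b * ?i^n / phi' s t) = p (b / phi s t)" for b n
    proof -
      have "b * ?i^n / phi' s t = ?i ^ Suc n * (b / phi s t)"
        using ph ph' q0 by (simp add: field_simps)
      then show ?thesis using per_inv[OF per q0, of "Suc n" "b / phi s t"] by (simp only:)
    qed
    have tb: "b * (p (b * ?i^n / phi' s t) * f (b * ?i^n / phi' s t)) * ?i^n
        = p (b / phi s t) * (b * f (b * ?i^n / phi' s t) * ?i^n)" for b n
      using pe[of b n] by (simp add: algebra_simps)
    have "(\<Sum>n. (b * (p (b * ?i^n / phi' s t) * f (b * ?i^n / phi' s t))
              - a * (p (a * ?i^n / phi' s t) * f (a * ?i^n / phi' s t))) * ?i^n)
        = (\<Sum>n. p (b / phi s t) * (b * f (b * ?i^n / phi' s t) * ?i^n)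
              - p (a / phi s t) * (a * f (a * ?i^n / phi' s t) * ?i^n))"
      by (simp add: left_diff_distrib tb)
    also have "\<dots> = p (b / phi s t) * (\<Sum>n. b * f (b * ?i^n / phi' s t) * ?i^n)
              - p (a / phi s t) * (\<Sum>n. a * f (a * ?i^n / phi' s t) * ?i^n)"
      using suminf_diff[OF summable_mult[OF sb] summable_mult[OF sa]] suminf_mult[OF sb] suminf_mult[OF sa]
      by simp
    also note E = calculation
    have L: "st_integral s t (\<lambda>x. p x * f x) a b = (1 - q) * (\<Sum>n. (b * (p (b * ?i^n / phi' s t) * f (b * ?i^n / phi' s t))
              - a * (p (a * ?i^n / phi' s t) * f (a * ?i^n / phi' s t))) * ?i^n)"
      unfolding st_integral_def q_def[symmetric] using False by (simp add: Let_def)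
    have R: "st_integral s t f 0 c = (1 - q) * (\<Sum>n. c * f (c * ?i^n / phi' s t) * ?i^n)" for c
      unfolding st_integral_def q_def[symmetric] using False by (simp add: Let_def)
    show ?thesis unfolding L R E by (simp add: algebra_simps)
  qed
qed

end
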